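(* Let $\frac12<\beta<\frac54$ and $\alpha+\beta=\frac54$, and let $r>\max(2\beta,2-\beta)$. Then there exists a constant $C>0$ such that for all $v,w$ for which the right-hand sides are finite, \[ |\langle B(\Lambda^{-2\alpha}w,v),\Lambda^{2r-2}v\rangle|\le C\big(\|w\|_{V^r}\|v\|_{V^{r-1}}+\|w\|_{V^{r+\beta-1}}\|v\|_{V^{r+\beta-1}}\big)\|v\|_{V^{r-1}} \] and \[ |\langle B(\Lambda^{-2\alpha}v,w),\Lambda^{2r-2}v\rangle|\le C\|v\|_{V^{r-1}}\|w\|_{V^{r+\beta-1}}\|v\|_{V^{r+\beta-1}}. \]
   Context: On the torus $\mathbb T=[0,2\pi]^3$, for $s\in\mathbb R$, $V^s$ is the space of real periodic vector fields $w=\sum_{k\in\mathbb Z^3\setminus\{0\}}w_ke^{ik\cdot x}$, $w_k\in\mathbb C^3$, $w_{-k}=\overline{w_k}$, $w_k\cdot k=0$ (divergence free, zero mean), with $\|w\|_{V^s}^2=\sum_k|w_k|^2|k|^{2s}<\infty$. $\Lambda^s$ is the Fourier multiplier by $|k|^s$. $B(u,v)=\Pi((u\cdot\nabla)v)$ with $\Pi$ the Leray projection, and $\langle B(u,v),z\rangle=\int_{\mathbb T}((u\cdot\nabla)v)\cdot z\,dx$ (for $z$ divergence free) denotes the $L^2$ pairing. *)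

theory Defs
  imports "HOL-Analysis.Analysis"
begin

text \<open>A (complex) periodic vector field on the 3-torus is represented by its Fourier
  coefficients: a map from wave vectors k in Z^3 to coefficients in C^3.\<close>
type_synonym field3 = "int ^ 3 \<Rightarrow> complex ^ 3"

definition knorm :: "int ^ 3 \<Rightarrow> real" where
  "knorm k = sqrt (\<Sum>i\<in>UNIV. (real_of_int (k $ i))\<^sup>2)"

definition cnorm2 :: "complex ^ 3 \<Rightarrow> real" where
  "cnorm2 a = (\<Sum>i\<in>UNIV. (cmod (a $ i))\<^sup>2)"

text \<open>Real, divergence free, zero mean.\<close>
definition dfield :: "field3 \<Rightarrow> bool" where
  "dfield w \<longleftrightarrow> w 0 = 0
     \<and> (\<forall>k. w (- k) = (\<chi> i. cnj (w k $ i)))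
     \<and> (\<forall>k. (\<Sum>i\<in>UNIV. w k $ i * of_int (k $ i)) = 0)"

definition finV :: "real \<Rightarrow> field3 \<Rightarrow> bool" where
  "finV s w \<longleftrightarrow> (\<lambda>k. cnorm2 (w k) * knorm k powr (2 * s)) summable_on UNIV"

definition Vnorm :: "real \<Rightarrow> field3 \<Rightarrow> real" where
  "Vnorm s w = sqrt (\<Sum>\<^sub>\<infinity>k. cnorm2 (w k) * knorm k powr (2 * s))"

text \<open>Fourier multiplier by |k|^s (the k = 0 coefficient is 0 for our fields).\<close>
definition Lam :: "real \<Rightarrow> field3 \<Rightarrow> field3" where
  "Lam s w = (\<lambda>k. (knorm k powr s) *\<^sub>R w k)"

text \<open>L^2 pairing \<langle>B(u,v),z\<rangle> = \<integral> ((u\<cdot>\<nabla>)v)\<cdot>z dx over [0,2\<pi>]^3, written in Fourier variables: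
  (2\<pi>)^3 \<Sum>_{j+l+m=0} (u_j \<cdot> i l)(v_l \<cdot> z_m).\<close>
definition Bpair :: "field3 \<Rightarrow> field3 \<Rightarrow> field3 \<Rightarrow> complex" where
  "Bpair u v z = complex_of_real ((2 * pi) ^ 3) *
     (\<Sum>\<^sub>\<infinity>(j, l) \<in> UNIV.
        (\<Sum>a\<in>UNIV. u j $ a * \<i> * of_int (l $ a)) * (\<Sum>b\<in>UNIV. v l $ b * z (- (j + l)) $ b))"

end

theory Submission
  imports Defs
begin


definition L2 :: "('a \<Rightarrow> real) \<Rightarrow> real" where
  "L2 f = sqrt (\<Sum>\<^sub>\<infinity>k. (f k)\<^sup>2)"

lemma fin_bound_summable:
  fixes f :: "'a \<Rightarrow> real"
  assumes "\<And>x. f x \<ge> 0" "\<And>F. finite F \<Longrightarrow> sum f F \<le> B"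
  shows "f summable_on UNIV" "infsum f UNIV \<le> B"
proof -
  show s: "f summable_on UNIV"
    by (rule nonneg_bdd_above_summable_on) (use assms in \<open>auto intro!: bdd_aboveI\<close>)
  show "infsum f UNIV \<le> B"
    by (rule infsum_le_finite_sums[OF s]) (use assms in auto)
qed

lemma cmod_infsum_bound:
  fixes g :: "'a \<Rightarrow> complex"
  assumes "\<And>F. finite F \<Longrightarrow> (\<Sum>x\<in>F. cmod (g x)) \<le> B"
  shows "cmod (infsum g UNIV) \<le> B"
proof -
  have s: "(\<lambda>x. cmod (g x)) summable_on UNIV" and b: "(\<Sum>\<^sub>\<infinity>x. cmod (g x)) \<le> B"
    using fin_bound_summable[of "\<lambda>x. cmod (g x)" B] assms by auto
  have "cmod (infsum g UNIV) \<le> (\<Sum>\<^sub>\<infinity>x. cmod (g x))"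
    by (rule norm_infsum_bound) (use s in simp)
  with b show ?thesis by linarith
qed

lemma cs_fin:
  fixes a b :: "'a \<Rightarrow> real"
  shows "(\<Sum>x\<in>F. a x * b x) \<le> sqrt (\<Sum>x\<in>F. (a x)\<^sup>2) * sqrt (\<Sum>x\<in>F. (b x)\<^sup>2)"
proof -
  have "(\<Sum>x\<in>F. a x * b x) \<le> sqrt ((\<Sum>x\<in>F. a x * b x)\<^sup>2)" by simp
  also have "\<dots> \<le> sqrt ((\<Sum>x\<in>F. (a x)\<^sup>2) * (\<Sum>x\<in>F. (b x)\<^sup>2))"
    by (rule real_sqrt_le_mono[OF Cauchy_Schwarz_ineq_sum])
  also have "\<dots> = sqrt (\<Sum>x\<in>F. (a x)\<^sup>2) * sqrt (\<Sum>x\<in>F. (b x)\<^sup>2)"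
    by (simp add: real_sqrt_mult)
  finally show ?thesis .
qed

lemma fin_le_L2:
  fixes f :: "'a \<Rightarrow> real"
  assumes "(\<lambda>k. (f k)\<^sup>2) summable_on UNIV" "finite F"
  shows "sqrt (\<Sum>x\<in>F. (f x)\<^sup>2) \<le> L2 f"
  unfolding L2_def
  by (rule real_sqrt_le_mono, rule finite_sum_le_infsum) (use assms in auto)

lemma L2_nonneg: "L2 f \<ge> 0" unfolding L2_def by (simp add: infsum_nonneg)

lemma cs_L2:
  fixes a b :: "'a \<Rightarrow> real"
  assumes "(\<lambda>k. (a k)\<^sup>2) summable_on UNIV" "(\<lambda>k. (b k)\<^sup>2) summable_on UNIV" "finite F"
  shows "(\<Sum>x\<in>F. a x * b x) \<le> L2 a * L2 b"
  by (rule order.trans[OF cs_fin], rule mult_mono)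
    (use fin_le_L2[OF assms(1,3)] fin_le_L2[OF assms(2,3)] L2_nonneg in \<open>auto intro: sum_nonneg\<close>)



lemma young1:
  fixes W f g h :: "'a::ab_group_add \<Rightarrow> real"
  assumes nn: "\<And>k. W k \<ge> 0" "\<And>k. f k \<ge> 0" "\<And>k. g k \<ge> 0" "\<And>k. h k \<ge> 0"
    and sm: "(\<lambda>k. (W k)\<^sup>2) summable_on UNIV" "(\<lambda>k. (f k)\<^sup>2) summable_on UNIV"
       "(\<lambda>k. (g k)\<^sup>2) summable_on UNIV" "(\<lambda>k. (h k)\<^sup>2) summable_on UNIV"
    and F: "finite F"
  shows "(\<Sum>(j,l)\<in>F. W j * f j * g l * h (j + l)) \<le> L2 W * L2 f * L2 g * L2 h"
proof -
  define J where "J = fst ` F"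
  define L where "L = snd ` F"
  have fin: "finite J" "finite L" using F by (auto simp: J_def L_def)
  have sub: "F \<subseteq> J \<times> L" by (force simp: J_def L_def)
  have "(\<Sum>(j,l)\<in>F. W j * f j * g l * h (j + l)) \<le> (\<Sum>(j,l)\<in>J \<times> L. W j * f j * g l * h (j + l))"
    by (rule sum_mono2) (use fin sub nn in \<open>auto intro!: mult_nonneg_nonneg\<close>)
  also have "\<dots> = (\<Sum>j\<in>J. W j * f j * (\<Sum>l\<in>L. g l * h (j + l)))"
    by (simp add: sum.cartesian_product[symmetric] sum_distrib_left mult.assoc)
  also have "\<dots> \<le> (\<Sum>j\<in>J. W j * f j * (L2 g * L2 h))"
  proof (rule sum_mono, rule mult_left_mono)
    fix j
    have "(\<Sum>l\<in>L. g l * h (j + l)) \<le> sqrt (\<Sum>l\<in>L. (g l)\<^sup>2) * sqrt (\<Sum>l\<in>L. (h (j + l))\<^sup>2)"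
      by (rule cs_fin)
    also have "(\<Sum>l\<in>L. (h (j + l))\<^sup>2) = (\<Sum>k\<in>(\<lambda>l. j + l) ` L. (h k)\<^sup>2)"
      by (subst sum.reindex) (auto simp: inj_on_def)
    also have "sqrt (\<Sum>l\<in>L. (g l)\<^sup>2) * sqrt \<dots> \<le> L2 g * L2 h"
      by (rule mult_mono) (use fin_le_L2[OF sm(3) fin(2)] fin_le_L2[OF sm(4)] fin L2_nonneg in \<open>auto intro: sum_nonneg\<close>)
    finally show "(\<Sum>l\<in>L. g l * h (j + l)) \<le> L2 g * L2 h" .
    show "0 \<le> W j * f j" using nn by simp
  qed
  also have "\<dots> = (\<Sum>j\<in>J. W j * f j) * (L2 g * L2 h)"
    by (simp add: sum_distrib_right)
  also have "\<dots> \<le> (L2 W * L2 f) * (L2 g * L2 h)"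
    by (rule mult_right_mono[OF cs_L2[OF sm(1,2) fin(1)]]) (simp add: L2_nonneg)
  finally show ?thesis by (simp add: mult.assoc)
qed

lemma young2:
  fixes W f g h :: "'a::ab_group_add \<Rightarrow> real"
  assumes nn: "\<And>k. W k \<ge> 0" "\<And>k. f k \<ge> 0" "\<And>k. g k \<ge> 0" "\<And>k. h k \<ge> 0"
    and sm: "(\<lambda>k. (W k)\<^sup>2) summable_on UNIV" "(\<lambda>k. (f k)\<^sup>2) summable_on UNIV"
       "(\<lambda>k. (g k)\<^sup>2) summable_on UNIV" "(\<lambda>k. (h k)\<^sup>2) summable_on UNIV"
    and F: "finite F"
  shows "(\<Sum>(j,l)\<in>F. f j * W l * g l * h (j + l)) \<le> L2 W * L2 f * L2 g * L2 h"
proof -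
  have "(\<Sum>(j,l)\<in>F. f j * W l * g l * h (j + l)) = (\<Sum>(l,j)\<in>prod.swap ` F. W l * g l * f j * h (l + j))"
    by (subst sum.reindex) (auto simp: inj_on_def add.commute mult_ac intro!: sum.cong)
  also have "\<dots> \<le> L2 W * L2 g * L2 f * L2 h"
    by (rule young1) (use nn sm F in auto)
  finally show ?thesis by (simp add: mult_ac)
qed



definition rv :: "int^3 \<Rightarrow> real^3" where "rv k = (\<chi> i. real_of_int (k $ i))"

lemma knorm_rv: "knorm k = norm (rv k)"
  by (simp add: knorm_def rv_def norm_vec_def L2_set_def)

lemma knorm_nonneg: "knorm k \<ge> 0" by (simp add: knorm_rv)

lemma knorm_eq0: "knorm k = 0 \<longleftrightarrow> k = 0"
  by (simp add: knorm_rv rv_def vec_eq_iff)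

lemma knorm_pos: "k \<noteq> 0 \<Longrightarrow> knorm k > 0"
  using knorm_eq0 knorm_nonneg by (metis less_eq_real_def)

lemma knorm_uminus: "knorm (- k) = knorm k"
  by (simp add: knorm_def)

lemma knorm_zero[simp]: "knorm 0 = 0" by (simp add: knorm_eq0)

lemma knorm_triangle: "knorm (j + l) \<le> knorm j + knorm l"
proof -
  have "rv (j + l) = rv j + rv l" by (simp add: rv_def vec_eq_iff)
  then show ?thesis by (simp add: knorm_rv norm_triangle_ineq)
qed

lemma knorm_diff: "knorm l \<le> knorm j + knorm (j + l)"
  using knorm_triangle[of "-j" "j + l"] by (simp add: knorm_uminus)

lemma knorm_sq: "(knorm k)\<^sup>2 = (\<Sum>i\<in>UNIV. (real_of_int (k $ i))\<^sup>2)"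
  by (simp add: knorm_def sum_nonneg)

lemma knorm_ge1: assumes "k \<noteq> 0" shows "(knorm k)\<^sup>2 \<ge> 1"
proof -
  obtain i where i: "k $ i \<noteq> 0" using assms by (auto simp: vec_eq_iff)
  then have a: "1 \<le> \<bar>real_of_int (k $ i)\<bar>" by linarith
  have "1 * 1 \<le> \<bar>real_of_int (k $ i)\<bar> * \<bar>real_of_int (k $ i)\<bar>"
    by (rule mult_mono) (use a in auto)
  then have "1 \<le> (real_of_int (k $ i))\<^sup>2" by (simp add: power2_eq_square)
  also have "\<dots> \<le> (\<Sum>i\<in>UNIV. (real_of_int (k $ i))\<^sup>2)"
    by (rule member_le_sum) auto
  finally show ?thesis by (simp add: knorm_sq)
qed

lemma sum_Un_le:
  fixes f :: "'a \<Rightarrow> real"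
  assumes "finite A" "finite B" "\<And>x. f x \<ge> 0"
  shows "sum f (A \<union> B) \<le> sum f A + sum f B"
proof -
  have "sum f (A \<inter> B) \<ge> 0" by (rule sum_nonneg) (use assms(3) in auto)
  then show ?thesis using sum_Un[OF assms(1,2), of f] by linarith
qed

lemma nat_series:
  fixes c :: real assumes "c > 1/2"
  shows "summable (\<lambda>m::nat. (1 + (real m)\<^sup>2) powr (-c))"
proof (rule summable_comparison_test')
  show "summable (\<lambda>m::nat. real m powr (-2*c))"
    using assms by (subst summable_real_powr_iff) auto
  show "norm ((1 + (real m)\<^sup>2) powr (-c)) \<le> real m powr (-2*c)" if "m \<ge> 1" for m
  proof -
    have "(1 + (real m)\<^sup>2) powr (-c) \<le> ((real m)\<^sup>2) powr (-c)"
      by (rule powr_mono2') (use assms that in auto)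
    also have "((real m)\<^sup>2) powr (-c) = real m powr (-2*c)"
    proof -
      have "real m powr 2 = (real m)\<^sup>2" using that by (simp add: powr_numeral)
      then have "((real m)\<^sup>2) powr (-c) = real m powr (2 * (-c))"
        by (metis powr_powr)
      then show ?thesis by simp
    qed
    finally show ?thesis by simp
  qed
qed

lemma int_series_bound:
  fixes c :: real assumes "c > 1/2" and N: "finite N"
  shows "(\<Sum>n\<in>N. (1 + (real_of_int n)\<^sup>2) powr (-c)) \<le> 2 * (\<Sum>m. (1 + (real m)\<^sup>2) powr (-c))"
proof -
  define G where "G m = (1 + (real m)\<^sup>2) powr (-c)" for m :: nat
  define M where "M = (\<lambda>n. nat \<bar>n\<bar>) ` N"
  have g: "(1 + (real_of_int n)\<^sup>2) powr (-c) = G (nat \<bar>n\<bar>)" for n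
    by (simp add: G_def)
  have finM: "finite M" using N by (simp add: M_def)
  have sub: "N \<subseteq> int ` M \<union> uminus ` int ` M"
  proof
    fix n assume "n \<in> N"
    then have "nat \<bar>n\<bar> \<in> M" by (auto simp: M_def)
    then show "n \<in> int ` M \<union> uminus ` int ` M"
      by (cases "n \<ge> 0") (auto simp: image_iff intro!: bexI[of _ "nat \<bar>n\<bar>"])
  qed
  have "(\<Sum>n\<in>N. G (nat \<bar>n\<bar>)) \<le> (\<Sum>n\<in>int ` M \<union> uminus ` int ` M. G (nat \<bar>n\<bar>))"
    by (rule sum_mono2) (use sub finM in \<open>simp_all add: G_def\<close>)
  also have "\<dots> \<le> (\<Sum>n\<in>int ` M. G (nat \<bar>n\<bar>)) + (\<Sum>n\<in>uminus ` int ` M. G (nat \<bar>n\<bar>))"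
    by (rule sum_Un_le) (use finM in \<open>simp_all add: G_def\<close>)
  also have "(\<Sum>n\<in>int ` M. G (nat \<bar>n\<bar>)) = (\<Sum>m\<in>M. G m)"
    by (subst sum.reindex) (auto simp: inj_on_def)
  also have "(\<Sum>n\<in>uminus ` int ` M. G (nat \<bar>n\<bar>)) = (\<Sum>m\<in>M. G m)"
    by (subst sum.reindex) (auto simp: inj_on_def image_image intro!: sum.reindex_cong[where l=int])
  also have "(\<Sum>m\<in>M. G m) + (\<Sum>m\<in>M. G m) = 2 * (\<Sum>m\<in>M. G m)" by simp
  also have "(\<Sum>m\<in>M. G m) \<le> (\<Sum>m. G m)"
    by (rule sum_le_suminf) (use nat_series[OF assms(1)] finM in \<open>simp_all add: G_def\<close>)
  finally have "(\<Sum>n\<in>N. G (nat \<bar>n\<bar>)) \<le> 2 * (\<Sum>m. G m)" by simp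
  then show ?thesis unfolding g by (simp only: G_def)
qed



lemma lattice_point:
  fixes q :: real assumes q: "q > 3"
  shows "knorm k powr (-q) \<le> 2 powr (q/2) *
    ((1 + (real_of_int (k$1))\<^sup>2) powr (-(q/6)) * (1 + (real_of_int (k$2))\<^sup>2) powr (-(q/6))
     * (1 + (real_of_int (k$3))\<^sup>2) powr (-(q/6)))"
proof (cases "k = 0")
  case True then show ?thesis by simp
next
  case False
  define N2 where "N2 = (knorm k)\<^sup>2"
  define c where "c = q/6"
  have N2: "N2 \<ge> 1" using knorm_ge1[OF False] by (simp add: N2_def)
  have N2s: "N2 = (real_of_int (k$1))\<^sup>2 + (real_of_int (k$2))\<^sup>2 + (real_of_int (k$3))\<^sup>2"
    by (simp add: N2_def knorm_sq sum_3)
  define P where "P = (1 + (real_of_int (k$1))\<^sup>2) * (1 + (real_of_int (k$2))\<^sup>2) * (1 + (real_of_int (k$3))\<^sup>2)"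
  have Ppos: "P > 0" by (simp add: P_def add_pos_nonneg)
  have "P \<le> (1 + N2) * (1 + N2) * (1 + N2)"
    unfolding P_def by (intro mult_mono) (auto simp: N2s add_nonneg_nonneg)
  also have "\<dots> \<le> (2 * N2) * (2 * N2) * (2 * N2)"
    by (intro mult_mono) (use N2 in auto)
  also have "\<dots> = (2 * N2) ^ 3" by (simp add: power3_eq_cube)
  finally have P_le: "P \<le> (2 * N2) ^ 3" .
  have prodeq: "(1 + (real_of_int (k$1))\<^sup>2) powr (-c) * (1 + (real_of_int (k$2))\<^sup>2) powr (-c)
     * (1 + (real_of_int (k$3))\<^sup>2) powr (-c) = P powr (-c)"
    by (simp add: P_def powr_mult add_nonneg_nonneg)
  have "((2 * N2) ^ 3) powr (-c) \<le> P powr (-c)"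
    by (rule powr_mono2') (use Ppos P_le q in \<open>auto simp: c_def\<close>)
  moreover have "((2 * N2) ^ 3) powr (-c) = 2 powr (-(q/2)) * knorm k powr (-q)"
  proof -
    have "((2 * N2) ^ 3) powr (-c) = ((2 * N2) powr 3) powr (-c)" using N2 by simp
    also have "\<dots> = (2 * N2) powr (-(q/2))" by (simp add: powr_powr c_def)
    also have "\<dots> = 2 powr (-(q/2)) * N2 powr (-(q/2))" using N2 by (simp add: powr_mult)
    also have "N2 powr (-(q/2)) = knorm k powr (-q)"
    proof -
      have "N2 = knorm k powr 2" by (simp add: N2_def knorm_nonneg)
      then show ?thesis by (simp add: powr_powr)
    qed
    finally show ?thesis .
  qed
  ultimately have "2 powr (-(q/2)) * knorm k powr (-q) \<le> P powr (-c)" by simp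
  then have "2 powr (q/2) * (2 powr (-(q/2)) * knorm k powr (-q)) \<le> 2 powr (q/2) * P powr (-c)"
    by (rule mult_left_mono) simp
  moreover have "2 powr (q/2) * (2 powr (-(q/2)) * knorm k powr (-q)) = knorm k powr (-q)"
    by (simp add: mult.assoc[symmetric] powr_add[symmetric])
  ultimately show ?thesis using prodeq by (simp add: c_def)
qed

lemma lattice_summable:
  fixes q :: real assumes q: "q > 3"
  shows "(\<lambda>k::int^3. knorm k powr (-q)) summable_on UNIV"
proof (rule fin_bound_summable(1))
  define g where "g n = (1 + (real_of_int n)\<^sup>2) powr (-(q/6))" for n :: int
  define S where "S = (\<Sum>m. (1 + (real m)\<^sup>2) powr (-(q/6)))"
  have c: "q/6 > 1/2" using q by simp
  have gS: "sum g A \<le> 2 * S" if "finite A" for A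
    using int_series_bound[OF c that] by (simp add: g_def S_def)
  have gnn: "g n \<ge> 0" for n by (simp add: g_def)
  have S0: "0 \<le> S" using gS[of "{}"] by simp
  show "knorm k powr (-q) \<ge> 0" for k by simp
  fix F :: "(int^3) set" assume F: "finite F"
  define \<pi> where "\<pi> k = (k$1, k$2, k$3)" for k :: "int^3"
  define A1 where "A1 = (\<lambda>k. k$1) ` F"
  define A2 where "A2 = (\<lambda>k. k$2) ` F"
  define A3 where "A3 = (\<lambda>k. k$3) ` F"
  have fins: "finite A1" "finite A2" "finite A3" using F by (auto simp: A1_def A2_def A3_def)
  have inj: "inj_on \<pi> F"
    by (auto simp: inj_on_def \<pi>_def vec_eq_iff forall_3)
  have "(\<Sum>k\<in>F. knorm k powr (-q)) \<le> (\<Sum>k\<in>F. 2 powr (q/2) * (g (k$1) * g (k$2) * g (k$3)))"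
    by (rule sum_mono) (use lattice_point[OF q] in \<open>simp add: g_def\<close>)
  also have "\<dots> = 2 powr (q/2) * (\<Sum>k\<in>F. (\<lambda>(a,b,c). g a * g b * g c) (\<pi> k))"
    by (simp add: sum_distrib_left \<pi>_def)
  also have "(\<Sum>k\<in>F. (\<lambda>(a,b,c). g a * g b * g c) (\<pi> k)) = (\<Sum>x\<in>\<pi> ` F. (\<lambda>(a,b,c). g a * g b * g c) x)"
    by (rule sum.reindex[OF inj, symmetric, unfolded o_def])
  also have "\<dots> \<le> (\<Sum>x\<in>A1 \<times> (A2 \<times> A3). (\<lambda>(a,b,c). g a * g b * g c) x)"
    by (rule sum_mono2) (use fins in \<open>auto simp: \<pi>_def A1_def A2_def A3_def gnn\<close>)
  also have "\<dots> = (\<Sum>a\<in>A1. \<Sum>b\<in>A2. \<Sum>c\<in>A3. g a * (g b * g c))"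
    by (simp add: sum.cartesian_product mult.assoc)
  also have "\<dots> = sum g A1 * (sum g A2 * sum g A3)"
  proof -
    have "(\<Sum>a\<in>A1. \<Sum>b\<in>A2. \<Sum>c\<in>A3. g a * (g b * g c)) = (\<Sum>a\<in>A1. g a * (\<Sum>b\<in>A2. g b * (\<Sum>c\<in>A3. g c)))"
      by (simp add: sum_distrib_left)
    also have "\<dots> = sum g A1 * (sum g A2 * sum g A3)"
      by (simp add: sum_distrib_right)
    finally show ?thesis .
  qed
  also have "\<dots> = sum g A1 * sum g A2 * sum g A3" by (simp add: mult.assoc)
  also have "\<dots> \<le> (2 * S) * (2 * S) * (2 * S)"
    by (intro mult_mono gS fins) (auto intro!: sum_nonneg gnn mult_nonneg_nonneg simp: S0)
  finally show "(\<Sum>k\<in>F. knorm k powr (-q)) \<le> 2 powr (q/2) * ((2 * S) * (2 * S) * (2 * S))"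
    by simp
qed



definition nv :: "field3 \<Rightarrow> int^3 \<Rightarrow> real" where "nv w k = sqrt (cnorm2 (w k))"
definition wt :: "real \<Rightarrow> field3 \<Rightarrow> int^3 \<Rightarrow> real" where "wt s w k = knorm k powr s * nv w k"
definition Wt :: "real \<Rightarrow> int^3 \<Rightarrow> real" where "Wt e k = knorm k powr (-e)"
definition dotk :: "complex^3 \<Rightarrow> int^3 \<Rightarrow> complex" where
  "dotk c k = (\<Sum>a\<in>UNIV. c $ a * of_int (k $ a))"
definition bil :: "complex^3 \<Rightarrow> complex^3 \<Rightarrow> complex" where
  "bil a b = (\<Sum>i\<in>UNIV. a $ i * b $ i)"

lemma cnorm2_nonneg: "cnorm2 c \<ge> 0" by (simp add: cnorm2_def sum_nonneg)
lemma nv_nonneg: "nv w k \<ge> 0" by (simp add: nv_def cnorm2_nonneg)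
lemma wt_nonneg: "wt s w k \<ge> 0" by (simp add: wt_def nv_nonneg)
lemma Wt_nonneg: "Wt e k \<ge> 0" by (simp add: Wt_def)

lemma powr_sq: "x \<ge> 0 \<Longrightarrow> (x powr s)\<^sup>2 = x powr (2 * s)" for x s :: real
  by (simp add: power2_eq_square powr_add[symmetric])

lemma wt_sq: "(wt s w k)\<^sup>2 = cnorm2 (w k) * knorm k powr (2 * s)"
  by (simp add: wt_def nv_def power_mult_distrib powr_sq knorm_nonneg cnorm2_nonneg)

lemma finV_wt: "finV s w \<Longrightarrow> (\<lambda>k. (wt s w k)\<^sup>2) summable_on UNIV"
  by (simp add: finV_def wt_sq)

lemma Vnorm_wt: "Vnorm s w = L2 (wt s w)"
  by (simp add: Vnorm_def L2_def wt_sq)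

lemma Wt_summable: "e > 3/2 \<Longrightarrow> (\<lambda>k. (Wt e k)\<^sup>2) summable_on UNIV"
  using lattice_summable[of "2 * e"] by (simp add: Wt_def powr_sq knorm_nonneg)

lemma nv_zero: "dfield w \<Longrightarrow> nv w 0 = 0"
  by (simp add: dfield_def nv_def cnorm2_def)

lemma nv_uminus: "dfield w \<Longrightarrow> nv w (- k) = nv w k"
  by (simp add: dfield_def nv_def cnorm2_def)

lemma nv_Lam: "nv (Lam s w) k = knorm k powr s * nv w k"
proof -
  have "cnorm2 (Lam s w k) = (knorm k powr s)\<^sup>2 * cnorm2 (w k)"
    by (simp add: Lam_def cnorm2_def sum_distrib_left power_mult_distrib)
  then show ?thesis by (simp add: nv_def real_sqrt_mult)
qed

lemma cmod_dotk: "cmod (dotk c k) \<le> sqrt (cnorm2 c) * knorm k"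
proof -
  have "cmod (dotk c k) \<le> (\<Sum>a\<in>UNIV. cmod (c $ a) * \<bar>real_of_int (k $ a)\<bar>)"
    unfolding dotk_def by (rule order.trans[OF norm_sum]) (simp add: norm_mult)
  also have "\<dots> \<le> sqrt (\<Sum>a\<in>UNIV. (cmod (c $ a))\<^sup>2) * sqrt (\<Sum>a\<in>UNIV. (\<bar>real_of_int (k $ a)\<bar>)\<^sup>2)"
    by (rule cs_fin)
  also have "\<dots> = sqrt (cnorm2 c) * knorm k" by (simp add: cnorm2_def knorm_def)
  finally show ?thesis .
qed

lemma cmod_bil: "cmod (bil a b) \<le> sqrt (cnorm2 a) * sqrt (cnorm2 b)"
proof -
  have "cmod (bil a b) \<le> (\<Sum>i\<in>UNIV. cmod (a $ i) * cmod (b $ i))"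
    unfolding bil_def by (rule order.trans[OF norm_sum]) (simp add: norm_mult)
  also have "\<dots> \<le> sqrt (\<Sum>i\<in>UNIV. (cmod (a $ i))\<^sup>2) * sqrt (\<Sum>i\<in>UNIV. (cmod (b $ i))\<^sup>2)"
    by (rule cs_fin)
  also have "\<dots> = sqrt (cnorm2 a) * sqrt (cnorm2 b)" by (simp add: cnorm2_def)
  finally show ?thesis .
qed

lemma dotk_add: "dotk c (j + l) = dotk c j + dotk c l"
  by (simp add: dotk_def distrib_left sum.distrib)

lemma dotk_uminus: "dotk c (- k) = - dotk c k"
  by (simp add: dotk_def sum_negf)

lemma dotk_div: "dfield w \<Longrightarrow> dotk (w k) k = 0"
  by (simp add: dfield_def dotk_def)

lemma dotk_Lam: "dotk (Lam s w j) l = of_real (knorm j powr s) * dotk (w j) l"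
  by (simp add: dotk_def Lam_def sum_distrib_left vector_scaleR_component) (simp add: scaleR_conv_of_real mult_ac)

lemma bil_comm: "bil a b = bil b a" by (simp add: bil_def mult.commute)

lemma bil_Lam: "bil a (Lam s w k) = of_real (knorm k powr s) * bil a (w k)"
  by (simp add: bil_def Lam_def sum_distrib_left vector_scaleR_component) (simp add: scaleR_conv_of_real mult_ac)

lemma summand_eq: "(\<Sum>a\<in>UNIV. c $ a * \<i> * of_int (l $ a)) = \<i> * dotk c l"
  by (simp add: dotk_def sum_distrib_left mult_ac)

lemma summand_eq2: "(\<Sum>b\<in>UNIV. x $ b * y $ b) = bil x y"
  by (simp add: bil_def)



lemma powr_diff_le:
  fixes a b s :: real
  assumes "0 < a" "a < b" "0 < s"
  shows "b powr s - a powr s \<le> s * (b - a) * (a powr (s-1) + b powr (s-1))"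
proof -
  have der: "\<And>x. a \<le> x \<Longrightarrow> x \<le> b \<Longrightarrow> ((\<lambda>z. z powr s) has_real_derivative s * x powr (s-1)) (at x)"
    using assms by (intro has_real_derivative_powr) auto
  obtain z where z: "a < z" "z < b" "b powr s - a powr s = (b - a) * (s * z powr (s - 1))"
    using MVT2[OF assms(2), of "\<lambda>z. z powr s" "\<lambda>z. s * z powr (s - 1)", OF der] by blast
  have "z powr (s-1) \<le> a powr (s-1) + b powr (s-1)"
  proof (cases "s - 1 \<ge> 0")
    case True
    then have "z powr (s-1) \<le> b powr (s-1)" by (intro powr_mono2) (use z assms in auto)
    then show ?thesis using powr_ge_zero[of a "s-1"] by linarith
  next
    case False
    then have "z powr (s-1) \<le> a powr (s-1)" by (intro powr_mono2') (use z assms in auto)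
    then show ?thesis using powr_ge_zero[of b "s-1"] by linarith
  qed
  then have "(b - a) * s * z powr (s - 1) \<le> (b - a) * s * (a powr (s-1) + b powr (s-1))"
    by (intro mult_left_mono) (use assms in auto)
  then show ?thesis using z(3) by (simp add: mult_ac)
qed

lemma abs_powr_diff:
  fixes x y s :: real
  assumes "0 < x" "0 < y" "0 < s"
  shows "\<bar>x powr s - y powr s\<bar> \<le> s * \<bar>x - y\<bar> * (x powr (s-1) + y powr (s-1))"
proof (cases x y rule: linorder_cases)
  case less
  then have "y powr s - x powr s \<le> s * (y - x) * (x powr (s-1) + y powr (s-1))"
    using powr_diff_le[of x y s] assms by auto
  moreover have "x powr s \<le> y powr s" using less assms by (intro powr_mono2) auto
  ultimately show ?thesis using less by (simp add: abs_if)
next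
  case equal then show ?thesis using assms by (simp add: powr_ge_zero)
next
  case greater
  then have "x powr s - y powr s \<le> s * (x - y) * (y powr (s-1) + x powr (s-1))"
    using powr_diff_le[of y x s] assms by auto
  moreover have "y powr s \<le> x powr s" using greater assms by (intro powr_mono2) auto
  ultimately show ?thesis using greater by (simp add: abs_if add.commute)
qed

lemma powr_compare:
  fixes x y q :: real
  assumes "0 < y" "y/2 \<le> x" "x \<le> 2*y"
  shows "x powr q \<le> 2 powr \<bar>q\<bar> * y powr q"
proof (cases "q \<ge> 0")
  case True
  then have "x powr q \<le> (2*y) powr q" by (intro powr_mono2) (use assms in auto)
  also have "\<dots> = 2 powr \<bar>q\<bar> * y powr q" using True assms by (simp add: powr_mult)
  finally show ?thesis .
next
  case False
  then have "x powr q \<le> (y/2) powr q" by (intro powr_mono2') (use assms in auto)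
  also have "\<dots> = y powr q / 2 powr q" using assms by (simp add: powr_divide)
  also have "\<dots> = 2 powr (-q) * y powr q" by (simp add: powr_minus divide_inverse)
  also have "\<dots> = 2 powr \<bar>q\<bar> * y powr q" using False by simp
  finally show ?thesis .
qed

lemma R2:
  fixes t y x s \<beta> :: real
  assumes tyx: "0 < t" "0 < y" "0 < x" "x \<le> t + y" and b: "\<beta> < 3/2" "1/2 < \<beta>" "0 < s + 1 - \<beta>"
  shows "t powr (2 * \<beta> - 5/2) * x * x powr (2 * s) \<le> 2 powr (s+1-\<beta>) *
    (t powr (-(s+3/2)) * t powr s * y powr (s+\<beta>) * x powr (s+\<beta>)
     + t powr s * y powr (-(s+3/2)) * y powr (s+\<beta>) * x powr (s+\<beta>))"
proof -
  define K where "K = 2 powr (s+1-\<beta>)"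
  define X where "X = x powr (s+\<beta>)"
  define P where "P = t powr (-(s+3/2)) * t powr s * y powr (s+\<beta>) * x powr (s+\<beta>)"
  define Q where "Q = t powr s * y powr (-(s+3/2)) * y powr (s+\<beta>) * x powr (s+\<beta>)"
  have P0: "P \<ge> 0" and Q0: "Q \<ge> 0" by (simp_all add: P_def Q_def)
  have K0: "K \<ge> 0" and X0: "X \<ge> 0" by (simp_all add: K_def X_def)
  have xx: "x * x powr (2 * s) = X * x powr (s+1-\<beta>)"
  proof -
    have "x * x powr (2 * s) = x powr 1 * x powr (2 * s)" using tyx by simp
    also have "\<dots> = x powr (1 + 2 * s)" by (rule powr_add[symmetric])
    also have "\<dots> = x powr ((s+\<beta>) + (s+1-\<beta>))" by (rule arg_cong[where f="\<lambda>e. x powr e"]) simp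
    also have "\<dots> = X * x powr (s+1-\<beta>)" unfolding X_def by (rule powr_add)
    finally show ?thesis .
  qed
  have t1: "t powr (-(s+3/2)) * t powr s = t powr (-3/2)" by (simp add: powr_add[symmetric] algebra_simps)
  have y1: "y powr (-(s+3/2)) * y powr (s+\<beta>) = y powr (\<beta> - 3/2)" by (simp add: powr_add[symmetric] algebra_simps)
  have "t powr (2 * \<beta> - 5/2) * x * x powr (2 * s) = t powr (2 * \<beta> - 5/2) * X * x powr (s+1-\<beta>)"
    using xx by (simp add: mult.assoc)
  also have "\<dots> \<le> K * (P + Q)"
  proof (cases "t \<le> y")
    case True
    have "x powr (s+1-\<beta>) \<le> (2*y) powr (s+1-\<beta>)" by (intro powr_mono2) (use tyx True b in auto)
    also have "\<dots> = K * y powr (s+1-\<beta>)" by (simp add: K_def powr_mult)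
    finally have a: "x powr (s+1-\<beta>) \<le> K * y powr (s+1-\<beta>)" .
    have e1: "t powr (2 * \<beta> - 5/2) = t powr (-3/2) * t powr (2 * \<beta>-1)" by (simp add: powr_add[symmetric] algebra_simps)
    have e2: "y powr (s+\<beta>) = y powr (2 * \<beta>-1) * y powr (s+1-\<beta>)" by (simp add: powr_add[symmetric] algebra_simps)
    have m: "t powr (2 * \<beta>-1) \<le> y powr (2 * \<beta>-1)" by (intro powr_mono2) (use tyx True b in auto)
    have "t powr (2 * \<beta> - 5/2) * X * x powr (s+1-\<beta>) \<le> t powr (2 * \<beta> - 5/2) * X * (K * y powr (s+1-\<beta>))"
      by (rule mult_left_mono[OF a]) (simp add: X0)
    also have "\<dots> = (K * X * t powr (-3/2) * y powr (s+1-\<beta>)) * t powr (2 * \<beta>-1)"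
      by (subst e1) (simp add: mult_ac)
    also have "\<dots> \<le> (K * X * t powr (-3/2) * y powr (s+1-\<beta>)) * y powr (2 * \<beta>-1)"
      by (rule mult_left_mono[OF m]) (simp add: K0 X0)
    also have "\<dots> = K * P" unfolding P_def X_def e2 t1[symmetric] by (simp add: mult_ac)
    also have "\<dots> \<le> K * (P + Q)" by (rule mult_left_mono) (use Q0 K0 in auto)
    finally show ?thesis .
  next
    case False
    have "x powr (s+1-\<beta>) \<le> (2*t) powr (s+1-\<beta>)" by (intro powr_mono2) (use tyx False b in auto)
    also have "\<dots> = K * t powr (s+1-\<beta>)" by (simp add: K_def powr_mult)
    finally have a: "x powr (s+1-\<beta>) \<le> K * t powr (s+1-\<beta>)" .
    have e1: "t powr (2 * \<beta> - 5/2) * t powr (s+1-\<beta>) = t powr s * t powr (\<beta> - 3/2)" by (simp add: powr_add[symmetric] algebra_simps)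
    have m: "t powr (\<beta> - 3/2) \<le> y powr (\<beta> - 3/2)" by (intro powr_mono2') (use tyx False b in auto)
    have "t powr (2 * \<beta> - 5/2) * X * x powr (s+1-\<beta>) \<le> t powr (2 * \<beta> - 5/2) * X * (K * t powr (s+1-\<beta>))"
      by (rule mult_left_mono[OF a]) (simp add: X0)
    also have "\<dots> = (K * X * t powr s) * (t powr (2 * \<beta> - 5/2) * t powr (s+1-\<beta>)) / t powr s"
      using tyx by (simp add: mult_ac)
    also have "\<dots> = (K * X * t powr s) * t powr (\<beta> - 3/2)" using tyx by (simp add: e1)
    also have "\<dots> \<le> (K * X * t powr s) * y powr (\<beta> - 3/2)"
      by (rule mult_left_mono[OF m]) (simp add: K0 X0)
    also have "\<dots> = K * Q" unfolding Q_def X_def y1[symmetric] by (simp add: mult_ac)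
    also have "\<dots> \<le> K * (P + Q)" by (rule mult_left_mono) (use P0 K0 in auto)
    finally show ?thesis .
  qed
  finally show ?thesis by (simp add: K_def P_def Q_def)
qed

lemma R1:
  fixes t y x s \<beta> :: real
  assumes tyx: "0 < t" "0 < y" "0 < x" "x \<le> t + y" "y \<le> t + x"
    and b: "0 < s" "1/2 < \<beta>" "\<beta> < 3/2"
  shows "t powr (2 * \<beta> - 5/2) * y * (x powr s * \<bar>x powr s - y powr s\<bar>) \<le>
    (s * (2 powr \<bar>s - 1\<bar> + 1)) * (t powr (-(s + 5/2 - 2 * \<beta>)) * t powr (s+1) * y powr s * x powr s)
    + ((3 powr s + 2 powr s) * 2 powr (5/2 - \<beta>)) * (t powr (s+\<beta>) * y powr (-(s+3/2)) * y powr (s+\<beta>) * x powr s)"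
proof -
  define K1 where "K1 = s * (2 powr \<bar>s - 1\<bar> + 1)"
  define K2 where "K2 = (3 powr s + 2 powr s) * 2 powr (5/2 - \<beta>)"
  define D where "D = \<bar>x powr s - y powr s\<bar>"
  define A where "A = t powr (2 * \<beta> - 3/2) * y powr s"
  define B where "B = t powr (s+\<beta>) * y powr (\<beta> - 3/2)"
  have K1_0: "K1 \<ge> 0" and K2_0: "K2 \<ge> 0" using b by (simp_all add: K1_def K2_def)
  have A0: "A \<ge> 0" and B0: "B \<ge> 0" by (simp_all add: A_def B_def)
  have ea: "t powr (-(s + 5/2 - 2 * \<beta>)) * t powr (s+1) = t powr (2 * \<beta> - 3/2)"
    by (simp add: powr_add[symmetric] algebra_simps)
  have eb: "y powr (-(s+3/2)) * y powr (s+\<beta>) = y powr (\<beta> - 3/2)"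
    by (simp add: powr_add[symmetric] algebra_simps)
  have core: "t powr (2 * \<beta> - 5/2) * y * D \<le> K1 * A + K2 * B"
  proof (cases "2 * t \<le> y")
    case True
    have xy: "\<bar>x - y\<bar> \<le> t" using tyx by auto
    have xc: "x powr (s-1) \<le> 2 powr \<bar>s - 1\<bar> * y powr (s-1)"
      by (rule powr_compare) (use tyx True in auto)
    have "D \<le> s * \<bar>x - y\<bar> * (x powr (s-1) + y powr (s-1))"
      unfolding D_def by (rule abs_powr_diff) (use tyx b in auto)
    also have "\<dots> \<le> s * t * (2 powr \<bar>s - 1\<bar> * y powr (s-1) + y powr (s-1))"
      by (intro mult_mono add_mono xc) (use b xy tyx in auto)
    also have "\<dots> = K1 * t * y powr (s-1)" by (simp add: K1_def algebra_simps)
    finally have Dle: "D \<le> K1 * t * y powr (s-1)" .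
    have "t powr (2 * \<beta> - 5/2) * y * D \<le> t powr (2 * \<beta> - 5/2) * y * (K1 * t * y powr (s-1))"
      by (rule mult_left_mono[OF Dle]) (use tyx in auto)
    also have "\<dots> = K1 * (t powr (2 * \<beta> - 5/2) * t) * (y * y powr (s-1))"
      by (simp add: mult_ac)
    also have "t powr (2 * \<beta> - 5/2) * t = t powr (2 * \<beta> - 3/2)"
    proof -
      have "t powr (2 * \<beta> - 3/2) = t powr ((2 * \<beta> - 5/2) + 1)" by simp
      also have "\<dots> = t powr (2 * \<beta> - 5/2) * t powr 1" by (rule powr_add)
      finally show ?thesis using tyx by simp
    qed
    also have "y * y powr (s-1) = y powr s"
    proof -
      have "y powr s = y powr (1 + (s - 1))" by simp
      also have "\<dots> = y powr 1 * y powr (s - 1)" by (rule powr_add)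
      finally show ?thesis using tyx by simp
    qed
    also have "K1 * t powr (2 * \<beta> - 3/2) * y powr s = K1 * A" by (simp add: A_def mult_ac)
    also have "\<dots> \<le> K1 * A + K2 * B" using K2_0 B0 by simp
    finally show ?thesis .
  next
    case False
    have "D \<le> x powr s + y powr s" unfolding D_def by (simp add: abs_le_iff)
    also have "\<dots> \<le> (3 * t) powr s + (2 * t) powr s"
      by (intro add_mono powr_mono2) (use tyx False b in auto)
    also have "\<dots> = (3 powr s + 2 powr s) * t powr s" using tyx by (simp add: powr_mult algebra_simps)
    finally have Dle: "D \<le> (3 powr s + 2 powr s) * t powr s" .
    have ys: "y = y powr (5/2 - \<beta>) * y powr (\<beta> - 3/2)"
    proof -
      have "y powr (5/2 - \<beta>) * y powr (\<beta> - 3/2) = y powr 1"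
        by (simp add: powr_add[symmetric])
      then show ?thesis using tyx by simp
    qed
    have yb: "y powr (5/2 - \<beta>) \<le> 2 powr (5/2 - \<beta>) * t powr (5/2 - \<beta>)"
    proof -
      have "y powr (5/2 - \<beta>) \<le> (2 * t) powr (5/2 - \<beta>)"
        by (intro powr_mono2) (use tyx False b in auto)
      then show ?thesis using tyx by (simp add: powr_mult)
    qed
    have "t powr (2 * \<beta> - 5/2) * y * D \<le> t powr (2 * \<beta> - 5/2) * y * ((3 powr s + 2 powr s) * t powr s)"
      by (rule mult_left_mono[OF Dle]) (use tyx in auto)
    also have "\<dots> = (t powr (2 * \<beta> - 5/2) * y powr (\<beta> - 3/2) * (3 powr s + 2 powr s) * t powr s) * y powr (5/2 - \<beta>)"
      by (subst ys) (simp add: mult_ac)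
    also have "\<dots> \<le> (t powr (2 * \<beta> - 5/2) * y powr (\<beta> - 3/2) * (3 powr s + 2 powr s) * t powr s) * (2 powr (5/2 - \<beta>) * t powr (5/2 - \<beta>))"
      by (rule mult_left_mono[OF yb]) simp
    also have "\<dots> = K2 * (t powr (2 * \<beta> - 5/2) * t powr s * t powr (5/2 - \<beta>)) * y powr (\<beta> - 3/2)"
      by (simp add: K2_def mult_ac)
    also have "t powr (2 * \<beta> - 5/2) * t powr s * t powr (5/2 - \<beta>) = t powr (s + \<beta>)"
      by (simp add: powr_add[symmetric] algebra_simps)
    also have "K2 * t powr (s + \<beta>) * y powr (\<beta> - 3/2) = K2 * B" by (simp add: B_def mult_ac)
    also have "\<dots> \<le> K1 * A + K2 * B" using K1_0 A0 by simp
    finally show ?thesis .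
  qed
  have "t powr (2 * \<beta> - 5/2) * y * (x powr s * \<bar>x powr s - y powr s\<bar>) = x powr s * (t powr (2 * \<beta> - 5/2) * y * D)"
    by (simp add: D_def mult_ac)
  also have "\<dots> \<le> x powr s * (K1 * A + K2 * B)" by (rule mult_left_mono[OF core]) simp
  also have "\<dots> = K1 * ((t powr (-(s + 5/2 - 2 * \<beta>)) * t powr (s+1)) * y powr s * x powr s)
     + K2 * (t powr (s+\<beta>) * (y powr (-(s+3/2)) * y powr (s+\<beta>)) * x powr s)"
    unfolding ea eb by (simp add: A_def B_def algebra_simps)
  finally show ?thesis by (simp add: K1_def K2_def mult_ac)
qed



lemma cmod_dot_Lam_div:
  assumes "dfield v"
  shows "cmod (dotk (Lam c v j) l) \<le> knorm j powr c * nv v j * knorm (j + l)"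
proof -
  have "dotk (v j) l = dotk (v j) (j + l)" using dotk_div[OF assms, of j] by (simp add: dotk_add)
  then have "cmod (dotk (Lam c v j) l) = knorm j powr c * cmod (dotk (v j) (j + l))"
    by (simp add: dotk_Lam norm_mult)
  also have "\<dots> \<le> knorm j powr c * (nv v j * knorm (j + l))"
    by (rule mult_left_mono) (simp_all add: cmod_dotk nv_def)
  finally show ?thesis by (simp add: mult_ac)
qed

lemma cmod_dot_Lam:
  shows "cmod (dotk (Lam c v j) l) \<le> knorm j powr c * nv v j * knorm l"
proof -
  have "cmod (dotk (Lam c v j) l) = knorm j powr c * cmod (dotk (v j) l)"
    by (simp add: dotk_Lam norm_mult)
  also have "\<dots> \<le> knorm j powr c * (nv v j * knorm l)"
    by (rule mult_left_mono) (simp_all add: cmod_dotk nv_def)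
  finally show ?thesis by (simp add: mult_ac)
qed

lemma cmod_bil_Lam:
  assumes "dfield v"
  shows "cmod (bil a (Lam c v (-(j + l)))) \<le> knorm (j + l) powr c * (sqrt (cnorm2 a) * nv v (j + l))"
proof -
  have "cmod (bil a (Lam c v (-(j + l)))) = knorm (j + l) powr c * cmod (bil a (v (-(j+l))))"
    by (subst bil_Lam, subst knorm_uminus) (simp add: norm_mult)
  also have "\<dots> \<le> knorm (j + l) powr c * (sqrt (cnorm2 a) * nv v (j + l))"
    by (rule mult_left_mono) (use cmod_bil[of a "v (-(j+l))"] nv_uminus[OF assms, of "j+l"] in \<open>simp_all add: nv_def\<close>)
  finally show ?thesis .
qed

lemma point2:
  fixes s \<beta> :: real
  assumes dv: "dfield v" "dfield w" and b: "1/2 < \<beta>" "\<beta> < 3/2" "0 < s + 1 - \<beta>"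
  shows "cmod ((\<Sum>a\<in>UNIV. Lam (2 * \<beta> - 5/2) v j $ a * \<i> * of_int (l $ a)) *
                (\<Sum>b\<in>UNIV. w l $ b * Lam (2 * s) v (- (j + l)) $ b))
    \<le> 2 powr (s+1-\<beta>) * (Wt (s+3/2) j * wt s v j * wt (s+\<beta>) w l * wt (s+\<beta>) v (j+l)
        + wt s v j * Wt (s+3/2) l * wt (s+\<beta>) w l * wt (s+\<beta>) v (j+l))"
    (is "?L \<le> ?R")
proof -
  define t y x where "t = knorm j" and "y = knorm l" and "x = knorm (j + l)"
  define A B C where "A = nv v j" and "B = nv w l" and "C = nv v (j + l)"
  have ABC: "A \<ge> 0" "B \<ge> 0" "C \<ge> 0" by (simp_all add: A_def B_def C_def nv_nonneg)
  have "?L = cmod (dotk (Lam (2 * \<beta> - 5/2) v j) l) * cmod (bil (w l) (Lam (2 * s) v (- (j + l))))"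
    by (simp add: summand_eq summand_eq2 norm_mult)
  also have "\<dots> \<le> (t powr (2 * \<beta> - 5/2) * A * x) * (x powr (2 * s) * (B * C))"
    unfolding t_def x_def A_def B_def C_def nv_def[of w]
    by (rule mult_mono[OF cmod_dot_Lam_div[OF dv(1)] cmod_bil_Lam[OF dv(1)]])
       (simp_all add: knorm_nonneg nv_nonneg cnorm2_nonneg)
  also have "\<dots> = (t powr (2 * \<beta> - 5/2) * x * x powr (2 * s)) * (A * B * C)" by (simp add: mult_ac)
  also have "\<dots> \<le> ?R"
  proof (cases "j = 0 \<or> l = 0 \<or> j + l = 0")
    case True
    then have "A * B * C = 0 \<or> x = 0"
      using nv_zero[OF dv(1)] nv_zero[OF dv(2)] by (auto simp: A_def B_def x_def)
    moreover have "?R \<ge> 0" by (simp add: wt_nonneg Wt_nonneg)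
    ultimately show ?thesis by auto
  next
    case False
    then have pos: "0 < t" "0 < y" "0 < x" by (auto simp: t_def y_def x_def knorm_pos)
    have tri: "x \<le> t + y" by (simp add: t_def y_def x_def knorm_triangle)
    have "(t powr (2 * \<beta> - 5/2) * x * x powr (2 * s)) * (A * B * C) \<le>
      (2 powr (s+1-\<beta>) *
      (t powr (-(s+3/2)) * t powr s * y powr (s+\<beta>) * x powr (s+\<beta>)
       + t powr s * y powr (-(s+3/2)) * y powr (s+\<beta>) * x powr (s+\<beta>))) * (A * B * C)"
      by (rule mult_right_mono[OF R2[OF pos tri b(2,1,3)]]) (simp add: ABC)
    also have "\<dots> = ?R" by (simp add: wt_def Wt_def t_def y_def x_def A_def B_def C_def algebra_simps)
    finally show ?thesis .
  qed
  finally show ?thesis .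
qed

lemma E2_gen:
  fixes s \<beta> :: real
  assumes b: "1/2 < \<beta>" "\<beta> < 3/2" "0 < s" "0 < s + 1 - \<beta>"
    and dv: "dfield v" "dfield w"
    and fin: "finV s v" "finV (s+\<beta>) w" "finV (s+\<beta>) v"
  shows "cmod (Bpair (Lam (2 * \<beta> - 5/2) v) w (Lam (2 * s) v))
    \<le> ((2 * pi) ^ 3 * (2 powr (s+1-\<beta>) * (2 * L2 (Wt (s+3/2))))) * Vnorm s v * Vnorm (s+\<beta>) w * Vnorm (s+\<beta>) v"
proof -
  define K0 where "K0 = 2 powr (s+1-\<beta>)"
  define \<tau> where "\<tau> = (\<lambda>(j::int^3, l::int^3). (\<Sum>a\<in>UNIV. Lam (2 * \<beta> - 5/2) v j $ a * \<i> * of_int (l $ a)) *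
                (\<Sum>b\<in>UNIV. w l $ b * Lam (2 * s) v (- (j + l)) $ b))"
  define T1 where "T1 = (\<lambda>(j,l). Wt (s+3/2) j * wt s v j * wt (s+\<beta>) w l * wt (s+\<beta>) v (j+l))"
  define T2 where "T2 = (\<lambda>(j,l). wt s v j * Wt (s+3/2) l * wt (s+\<beta>) w l * wt (s+\<beta>) v (j+l))"
  define M where "M = L2 (Wt (s+3/2)) * L2 (wt s v) * L2 (wt (s+\<beta>) w) * L2 (wt (s+\<beta>) v)"
  have WS: "(\<lambda>k. (Wt (s+3/2) k)\<^sup>2) summable_on UNIV" by (rule Wt_summable) (use b in simp)
  have pt: "cmod (\<tau> p) \<le> K0 * (T1 p + T2 p)" for p
  proof -
    obtain j l where p: "p = (j, l)" by (cases p)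
    show ?thesis unfolding p \<tau>_def T1_def T2_def K0_def
      using point2[OF dv b(1,2,4), of j l] by simp
  qed
  have bound: "cmod (infsum \<tau> UNIV) \<le> K0 * (2 * M)"
  proof (rule cmod_infsum_bound)
    fix F :: "((int^3) \<times> (int^3)) set" assume F: "finite F"
    have "(\<Sum>p\<in>F. cmod (\<tau> p)) \<le> (\<Sum>p\<in>F. K0 * (T1 p + T2 p))" by (rule sum_mono[OF pt])
    also have "\<dots> = K0 * (sum T1 F + sum T2 F)" by (simp add: sum.distrib distrib_left sum_distrib_left)
    also have "\<dots> \<le> K0 * (M + M)"
    proof (rule mult_left_mono, rule add_mono)
      show "sum T1 F \<le> M" unfolding T1_def M_def
        by (rule young1) (use F WS finV_wt[OF fin(1)] finV_wt[OF fin(2)] finV_wt[OF fin(3)] in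
           \<open>simp_all add: Wt_nonneg wt_nonneg\<close>)
      show "sum T2 F \<le> M" unfolding T2_def M_def
        by (rule young2) (use F WS finV_wt[OF fin(1)] finV_wt[OF fin(2)] finV_wt[OF fin(3)] in
           \<open>simp_all add: Wt_nonneg wt_nonneg\<close>)
      show "0 \<le> K0" by (simp add: K0_def)
    qed
    finally show "(\<Sum>p\<in>F. cmod (\<tau> p)) \<le> K0 * (2 * M)" by simp
  qed
  have "cmod (Bpair (Lam (2 * \<beta> - 5/2) v) w (Lam (2 * s) v)) = (2 * pi) ^ 3 * cmod (infsum \<tau> UNIV)"
    unfolding Bpair_def \<tau>_def norm_mult norm_of_real by simp
  also have "\<dots> \<le> (2 * pi) ^ 3 * (K0 * (2 * M))" by (rule mult_left_mono[OF bound]) simp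
  finally show ?thesis by (simp add: K0_def M_def Vnorm_wt mult_ac)
qed

lemma dotk_Lam_self: "dfield w \<Longrightarrow> dotk (Lam c w j) j = 0"
  by (simp add: dotk_Lam dotk_div)

lemma antisym_G:
  assumes "dfield w"
  shows "\<i> * dotk (Lam c w j) (-(j+l)) * bil (v (-(j+l))) (v (-(j + -(j+l))))
       = - (\<i> * dotk (Lam c w j) l * bil (v l) (v (-(j+l))))"
proof -
  have "-(j + -(j+l)) = l" by (simp add: algebra_simps)
  moreover have "dotk (Lam c w j) (-(j+l)) = - dotk (Lam c w j) l"
    by (subst dotk_uminus) (simp add: dotk_add dotk_Lam_self[OF assms])
  ultimately show ?thesis by (simp add: bil_comm)
qed

lemma point1:
  fixes s \<beta> :: real
  assumes dv: "dfield v" "dfield w" and b: "0 < s" "1/2 < \<beta>" "\<beta> < 3/2"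
  shows "cmod (\<i> * dotk (Lam (2 * \<beta> - 5/2) w j) l * bil (v l) (v (-(j+l)))
            * of_real (knorm (j+l) powr s * (knorm (j+l) powr s - knorm l powr s)))
    \<le> (s * (2 powr \<bar>s - 1\<bar> + 1)) * (Wt (s + 5/2 - 2 * \<beta>) j * wt (s+1) w j * wt s v l * wt s v (j+l))
      + ((3 powr s + 2 powr s) * 2 powr (5/2 - \<beta>)) * (wt (s+\<beta>) w j * Wt (s+3/2) l * wt (s+\<beta>) v l * wt s v (j+l))"
    (is "?L \<le> ?R")
proof -
  define t y x where "t = knorm j" and "y = knorm l" and "x = knorm (j + l)"
  define A B C where "A = nv w j" and "B = nv v l" and "C = nv v (j + l)"
  have ABC: "A \<ge> 0" "B \<ge> 0" "C \<ge> 0" by (simp_all add: A_def B_def C_def nv_nonneg)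
  have cb: "cmod (bil (v l) (v (-(j+l)))) \<le> B * C"
    using cmod_bil[of "v l" "v (-(j+l))"] nv_uminus[OF dv(1), of "j+l"] by (simp add: B_def C_def nv_def)
  have "?L = cmod (dotk (Lam (2 * \<beta> - 5/2) w j) l) * cmod (bil (v l) (v (-(j+l))))
             * (x powr s * \<bar>x powr s - y powr s\<bar>)"
    by (simp only: norm_mult norm_of_real abs_mult x_def y_def) simp
  also have "\<dots> \<le> (t powr (2 * \<beta> - 5/2) * A * y) * (B * C) * (x powr s * \<bar>x powr s - y powr s\<bar>)"
    by (intro mult_right_mono mult_mono cb)
       (use cmod_dot_Lam[of "2 * \<beta> - 5/2" w j l] in \<open>simp_all add: t_def y_def A_def knorm_nonneg nv_nonneg ABC\<close>)
  also have "\<dots> = (t powr (2 * \<beta> - 5/2) * y * (x powr s * \<bar>x powr s - y powr s\<bar>)) * (A * B * C)"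
    by (simp add: mult_ac)
  also have "\<dots> \<le> ?R"
  proof (cases "j = 0 \<or> l = 0 \<or> j + l = 0")
    case True
    then have "A * B * C = 0 \<or> y = 0 \<or> x = 0"
      using nv_zero[OF dv(1)] nv_zero[OF dv(2)] by (auto simp: A_def B_def x_def y_def)
    moreover have "?R \<ge> 0" using b by (simp add: wt_nonneg Wt_nonneg)
    ultimately show ?thesis using b by auto
  next
    case False
    then have pos: "0 < t" "0 < y" "0 < x" by (auto simp: t_def y_def x_def knorm_pos)
    have tri: "x \<le> t + y" "y \<le> t + x" by (simp_all add: t_def y_def x_def knorm_triangle knorm_diff)
    have "(t powr (2 * \<beta> - 5/2) * y * (x powr s * \<bar>x powr s - y powr s\<bar>)) * (A * B * C) \<le>
      ((s * (2 powr \<bar>s - 1\<bar> + 1)) * (t powr (-(s + 5/2 - 2 * \<beta>)) * t powr (s+1) * y powr s * x powr s)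
    + ((3 powr s + 2 powr s) * 2 powr (5/2 - \<beta>)) * (t powr (s+\<beta>) * y powr (-(s+3/2)) * y powr (s+\<beta>) * x powr s)) * (A * B * C)"
      by (rule mult_right_mono[OF R1[OF pos tri b]]) (simp add: ABC)
    also have "\<dots> = ?R" by (simp add: wt_def Wt_def t_def y_def x_def A_def B_def C_def algebra_simps)
    finally show ?thesis .
  qed
  finally show ?thesis .
qed

lemma E1_gen:
  fixes s \<beta> :: real
  assumes b: "0 < s" "1/2 < \<beta>" "\<beta> < 3/2" "2 * \<beta> < s + 1"
    and dv: "dfield v" "dfield w"
    and fin: "finV (s+1) w" "finV s v" "finV (s+\<beta>) w" "finV (s+\<beta>) v"
  shows "cmod (Bpair (Lam (2 * \<beta> - 5/2) w) v (Lam (2 * s) v))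
    \<le> ((2 * pi) ^ 3 * ((s * (2 powr \<bar>s - 1\<bar> + 1)) * L2 (Wt (s + 5/2 - 2 * \<beta>))
                       + ((3 powr s + 2 powr s) * 2 powr (5/2 - \<beta>)) * L2 (Wt (s+3/2))))
       * (Vnorm (s+1) w * Vnorm s v + Vnorm (s+\<beta>) w * Vnorm (s+\<beta>) v) * Vnorm s v"
proof -
  define K1 where "K1 = s * (2 powr \<bar>s - 1\<bar> + 1)"
  define K2 where "K2 = (3 powr s + 2 powr s) * 2 powr (5/2 - \<beta>)"
  define c where "c = 2 * \<beta> - 5/2"
  define G where "G j l = \<i> * dotk (Lam c w j) l * bil (v l) (v (-(j+l)))" for j l
  define \<tau> where "\<tau> = (\<lambda>(j::int^3, l::int^3). (\<Sum>a\<in>UNIV. Lam c w j $ a * \<i> * of_int (l $ a)) *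
                (\<Sum>b\<in>UNIV. v l $ b * Lam (2 * s) v (- (j + l)) $ b))"
  define \<tau>' where "\<tau>' = (\<lambda>(j::int^3, l::int^3). G j l * of_real (knorm l powr s * knorm (j+l) powr s))"
  define \<delta> where "\<delta> = (\<lambda>(j::int^3, l::int^3). G j l * of_real (knorm (j+l) powr s * (knorm (j+l) powr s - knorm l powr s)))"
  define S1 where "S1 = (\<lambda>(j,l). Wt (s + 5/2 - 2 * \<beta>) j * wt (s+1) w j * wt s v l * wt s v (j+l))"
  define S2 where "S2 = (\<lambda>(j,l). wt (s+\<beta>) w j * Wt (s+3/2) l * wt (s+\<beta>) v l * wt s v (j+l))"
  define M1 where "M1 = L2 (Wt (s + 5/2 - 2 * \<beta>)) * L2 (wt (s+1) w) * L2 (wt s v) * L2 (wt s v)"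
  define M2 where "M2 = L2 (Wt (s+3/2)) * L2 (wt (s+\<beta>) w) * L2 (wt (s+\<beta>) v) * L2 (wt s v)"
  define Bd where "Bd = K1 * M1 + K2 * M2"
  have K0: "K1 \<ge> 0" "K2 \<ge> 0" using b by (simp_all add: K1_def K2_def)
  have WS1: "(\<lambda>k. (Wt (s + 5/2 - 2 * \<beta>) k)\<^sup>2) summable_on UNIV" by (rule Wt_summable) (use b in simp)
  have WS2: "(\<lambda>k. (Wt (s+3/2) k)\<^sup>2) summable_on UNIV" by (rule Wt_summable) (use b in simp)
  have split: "\<tau> p = \<tau>' p + \<delta> p" for p
  proof -
    obtain j l where p: "p = (j, l)" by (cases p)
    have e: "knorm (j+l) powr (2 * s) = knorm l powr s * knorm (j+l) powr s + knorm (j+l) powr s * (knorm (j+l) powr s - knorm l powr s)"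
      by (simp add: algebra_simps powr_add[symmetric])
    have ku: "knorm (- (j+l)) = knorm (j+l)" by (rule knorm_uminus)
    have "\<tau> p = G j l * of_real (knorm (j+l) powr (2 * s))"
      unfolding p \<tau>_def G_def summand_eq summand_eq2 by (simp only: bil_Lam ku prod.case) (simp add: mult_ac)
    then show ?thesis unfolding e p \<tau>'_def \<delta>_def by (simp add: distrib_left)
  qed
  have pt: "cmod (\<delta> p) \<le> K1 * S1 p + K2 * S2 p" for p
  proof -
    obtain j l where p: "p = (j, l)" by (cases p)
    show ?thesis unfolding p \<delta>_def S1_def S2_def K1_def K2_def G_def c_def
      using point1[OF dv b(1,2,3), of j l] by simp
  qed
  have fsum: "(\<Sum>p\<in>F. cmod (\<delta> p)) \<le> Bd" if F: "finite F" for F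
  proof -
    have "(\<Sum>p\<in>F. cmod (\<delta> p)) \<le> (\<Sum>p\<in>F. K1 * S1 p + K2 * S2 p)" by (rule sum_mono[OF pt])
    also have "\<dots> = K1 * sum S1 F + K2 * sum S2 F" by (simp add: sum.distrib sum_distrib_left)
    also have "\<dots> \<le> K1 * M1 + K2 * M2"
    proof (rule add_mono; rule mult_left_mono)
      show "sum S1 F \<le> M1" unfolding S1_def M1_def
        by (rule young1) (use F WS1 finV_wt[OF fin(1)] finV_wt[OF fin(2)] in
           \<open>simp_all add: Wt_nonneg wt_nonneg\<close>)
      show "sum S2 F \<le> M2" unfolding S2_def M2_def
        by (rule young2) (use F WS2 finV_wt[OF fin(2)] finV_wt[OF fin(3)] finV_wt[OF fin(4)] in
           \<open>simp_all add: Wt_nonneg wt_nonneg\<close>)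
    qed (use K0 in auto)
    finally show ?thesis by (simp add: Bd_def)
  qed
  have Bd0: "Bd \<ge> 0" using fsum[of "{}"] by simp
  have dsum: "\<delta> summable_on UNIV"
    by (rule abs_summable_summable, rule fin_bound_summable(1)[of _ Bd]) (use fsum in auto)
  have t0: "infsum \<tau>' UNIV = 0"
  proof -
    define \<sigma> where "\<sigma> = (\<lambda>(j::int^3, l::int^3). (j, -(j+l)))"
    have ss: "\<sigma> (\<sigma> p) = p" for p by (cases p) (simp add: \<sigma>_def)
    have neg: "\<tau>' (\<sigma> p) = - \<tau>' p" for p
    proof -
      obtain j l where p: "p = (j, l)" by (cases p)
      have "G j (-(j+l)) = - G j l" unfolding G_def by (rule antisym_G[OF dv(2)])
      moreover have "knorm (j + -(j+l)) = knorm l"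
        using knorm_uminus[of l] by (simp add: algebra_simps)
      moreover have "knorm (- j - l) = knorm (j+l)" using knorm_uminus[of "j+l"] by simp
      ultimately show ?thesis unfolding p \<sigma>_def \<tau>'_def by (simp add: knorm_uminus mult_ac)
    qed
    have "infsum (\<lambda>p. \<tau>' (\<sigma> p)) UNIV = infsum \<tau>' UNIV"
      by (rule infsum_reindex_bij_witness[of UNIV \<sigma> \<sigma>]) (simp_all add: ss)
    then have "infsum \<tau>' UNIV = - infsum \<tau>' UNIV" by (simp add: neg infsum_uminus)
    then show ?thesis by simp
  qed
  have main: "cmod (infsum \<tau> UNIV) \<le> Bd"
  proof (cases "\<tau> summable_on UNIV")
    case True
    have "(\<lambda>p. \<tau> p + - \<delta> p) summable_on UNIV"
      by (rule summable_on_add[OF True]) (simp add: summable_on_uminus dsum)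
    then have t'sum: "\<tau>' summable_on UNIV" using split by (simp add: algebra_simps)
    have "infsum \<tau> UNIV = infsum (\<lambda>p. \<tau>' p + \<delta> p) UNIV" by (rule infsum_cong) (simp add: split)
    also have "\<dots> = infsum \<delta> UNIV" by (simp add: infsum_add[OF t'sum dsum] t0)
    finally show ?thesis using cmod_infsum_bound[OF fsum] by simp
  next
    case False
    then show ?thesis using Bd0 by (simp add: infsum_not_exists)
  qed
  have "cmod (Bpair (Lam (2 * \<beta> - 5/2) w) v (Lam (2 * s) v)) = (2 * pi) ^ 3 * cmod (infsum \<tau> UNIV)"
    unfolding Bpair_def \<tau>_def c_def norm_mult norm_of_real by simp
  also have "\<dots> \<le> (2 * pi) ^ 3 * Bd" by (rule mult_left_mono[OF main]) simp
  also have "\<dots> \<le> ((2 * pi) ^ 3 * (K1 * L2 (Wt (s + 5/2 - 2 * \<beta>)) + K2 * L2 (Wt (s+3/2))))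
       * (Vnorm (s+1) w * Vnorm s v + Vnorm (s+\<beta>) w * Vnorm (s+\<beta>) v) * Vnorm s v"
  proof -
    define a where "a = K1 * L2 (Wt (s + 5/2 - 2 * \<beta>))"
    define b' where "b' = K2 * L2 (Wt (s+3/2))"
    define P where "P = Vnorm (s+1) w * Vnorm s v"
    define Q where "Q = Vnorm (s+\<beta>) w * Vnorm (s+\<beta>) v"
    have nn: "a \<ge> 0" "b' \<ge> 0" "P \<ge> 0" "Q \<ge> 0" "Vnorm s v \<ge> 0"
      using K0 by (simp_all add: a_def b'_def P_def Q_def Vnorm_wt L2_nonneg)
    have "Bd = a * P * Vnorm s v + b' * Q * Vnorm s v"
      by (simp add: Bd_def M1_def M2_def a_def b'_def P_def Q_def Vnorm_wt mult_ac)
    also have "\<dots> \<le> (a + b') * (P + Q) * Vnorm s v"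
      using nn by (simp add: algebra_simps mult_nonneg_nonneg)
    finally have "Bd \<le> (a + b') * (P + Q) * Vnorm s v" .
    then have "(2 * pi) ^ 3 * Bd \<le> (2 * pi) ^ 3 * ((a + b') * (P + Q) * Vnorm s v)"
      by (rule mult_left_mono) simp
    then show ?thesis by (simp add: a_def b'_def P_def Q_def mult_ac)
  qed
  finally show ?thesis by (simp add: K1_def K2_def)
qed

theorem lemma14:
  fixes \<alpha> \<beta> r :: real
  assumes "1/2 < \<beta>" and "\<beta> < 5/4" and "\<alpha> + \<beta> = 5/4"
    and "r > max (2 * \<beta>) (2 - \<beta>)"
  shows "\<exists>C>0.
    (\<forall>v w. dfield v \<and> dfield w \<and> finV r w \<and> finV (r - 1) v \<and> finV (r + \<beta> - 1) w
        \<and> finV (r + \<beta> - 1) v \<longrightarrow>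
       cmod (Bpair (Lam (-2 * \<alpha>) w) v (Lam (2 * r - 2) v))
         \<le> C * (Vnorm r w * Vnorm (r - 1) v + Vnorm (r + \<beta> - 1) w * Vnorm (r + \<beta> - 1) v)
             * Vnorm (r - 1) v)
  \<and> (\<forall>v w. dfield v \<and> dfield w \<and> finV (r - 1) v \<and> finV (r + \<beta> - 1) w
        \<and> finV (r + \<beta> - 1) v \<longrightarrow>
       cmod (Bpair (Lam (-2 * \<alpha>) v) w (Lam (2 * r - 2) v))
         \<le> C * Vnorm (r - 1) v * Vnorm (r + \<beta> - 1) w * Vnorm (r + \<beta> - 1) v)"
proof -
  have r2b: "2 * \<beta> < r" using assms(4) by simp
  have hs: "0 < r - 1" "1/2 < \<beta>" "\<beta> < 3/2" "2 * \<beta> < (r - 1) + 1" "0 < (r - 1) + 1 - \<beta>"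
    using assms r2b by auto
  have eqs: "2 * \<beta> - 5/2 = -2 * \<alpha>" "2 * (r - 1) = 2 * r - 2" "r - 1 + 1 = r" "r - 1 + \<beta> = r + \<beta> - 1"
    using assms(3) by auto
  define C1 where "C1 = (2 * pi) ^ 3 * (((r - 1) * (2 powr \<bar>(r - 1) - 1\<bar> + 1)) * L2 (Wt ((r - 1) + 5/2 - 2 * \<beta>))
                       + ((3 powr (r - 1) + 2 powr (r - 1)) * 2 powr (5/2 - \<beta>)) * L2 (Wt ((r - 1)+3/2)))"
  define C2 where "C2 = (2 * pi) ^ 3 * (2 powr ((r - 1)+1-\<beta>) * (2 * L2 (Wt ((r - 1)+3/2))))"
  have C1: "C1 \<ge> 0" using hs by (simp add: C1_def L2_nonneg)
  have C2: "C2 \<ge> 0" by (simp add: C2_def L2_nonneg)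
  define C where "C = max C1 C2 + 1"
  have CC: "C1 \<le> C" "C2 \<le> C" "C > 0" using C1 C2 by (auto simp: C_def)
  have VN: "Vnorm a u \<ge> 0" for a u by (simp add: Vnorm_wt L2_nonneg)
  note E1 = E1_gen[of "r - 1" \<beta> v w for v w, OF hs(1,2,3,4), unfolded eqs]
  note E2 = E2_gen[of \<beta> "r - 1" v w for v w, OF hs(2,3,1,5), unfolded eqs]
  show ?thesis
  proof (intro exI[of _ C] conjI allI impI)
    show "C > 0" by (rule CC)
  next
    fix v w
    assume H: "dfield v \<and> dfield w \<and> finV r w \<and> finV (r - 1) v \<and> finV (r + \<beta> - 1) w \<and> finV (r + \<beta> - 1) v"
    have "cmod (Bpair (Lam (-2 * \<alpha>) w) v (Lam (2 * r - 2) v))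
       \<le> C1 * (Vnorm r w * Vnorm (r - 1) v + Vnorm (r + \<beta> - 1) w * Vnorm (r + \<beta> - 1) v) * Vnorm (r - 1) v"
      using E1[of v w] H by (simp add: C1_def)
    also have "\<dots> \<le> C * (Vnorm r w * Vnorm (r - 1) v + Vnorm (r + \<beta> - 1) w * Vnorm (r + \<beta> - 1) v) * Vnorm (r - 1) v"
      by (intro mult_right_mono CC) (simp_all add: VN)
    finally show "cmod (Bpair (Lam (-2 * \<alpha>) w) v (Lam (2 * r - 2) v))
       \<le> C * (Vnorm r w * Vnorm (r - 1) v + Vnorm (r + \<beta> - 1) w * Vnorm (r + \<beta> - 1) v) * Vnorm (r - 1) v" .
  next
    fix v w
    assume H: "dfield v \<and> dfield w \<and> finV (r - 1) v \<and> finV (r + \<beta> - 1) w \<and> finV (r + \<beta> - 1) v"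
    have "cmod (Bpair (Lam (-2 * \<alpha>) v) w (Lam (2 * r - 2) v))
       \<le> C2 * Vnorm (r - 1) v * Vnorm (r + \<beta> - 1) w * Vnorm (r + \<beta> - 1) v"
      using E2[of v w] H by (simp add: C2_def)
    also have "\<dots> \<le> C * Vnorm (r - 1) v * Vnorm (r + \<beta> - 1) w * Vnorm (r + \<beta> - 1) v"
      by (intro mult_right_mono CC) (simp_all add: VN)
    finally show "cmod (Bpair (Lam (-2 * \<alpha>) v) w (Lam (2 * r - 2) v))
       \<le> C * Vnorm (r - 1) v * Vnorm (r + \<beta> - 1) w * Vnorm (r + \<beta> - 1) v" .
  qed
qed


end
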